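(* Let $\lambda>0$ and $\sigma<2\sqrt\pi$. The measure $\nu$ is $\sigma$-finite; more precisely, for every $\epsilon\in(0,1)$, $\nu(\{\phi:\epsilon<M_\phi(\Lambda)<\epsilon^{-1}\})<\infty$ (indeed also $\hat\mu(\{\phi:\epsilon<M_\phi(\Lambda)<\epsilon^{-1}\})<\infty$). Moreover, for every $f\in H$, $\epsilon\in(0,1)$, $a>0$ and $p\in[1,\infty)$, the function $\phi\mapsto\langle f,\Delta\phi\rangle\,\mathbf 1_{[\epsilon,\epsilon^{-1}]}(M_\phi(\Lambda))$ belongs to $L^p(\hat\mu)$ and $L^p(\nu)$, and the function $\phi\mapsto\exp(a|\langle\phi_0,f\rangle_H|)\,\mathbf 1_{[\epsilon,\epsilon^{-1}]}(M_\phi(\Lambda))$ is integrable with respect to $\hat\mu$ and $\nu$.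
   Context: Let $\Lambda=\mathbb C/(\mathbb Z+\tau\mathbb Z)$, $\Im\tau>0$, be a flat torus with Lebesgue area measure $\omega_0$ and Laplacian $\Delta$. Let $H=H^1(\Lambda)$ with $\langle u,v\rangle_H=\int\nabla u\cdot\nabla v\,\omega_0$, $\Phi=H^{-\varepsilon}(\Lambda)$ for a fixed small $\varepsilon>0$, each $\phi=m+\phi_0$ ($m\in\mathbb R$ constant, $\phi_0$ mean zero). $\mu$ is the law of the mean-zero Gaussian free field with covariance operator $\frac{\sigma^2}{2}(-\Delta)^{-1}$, $\hat\mu=dm\otimes d\mu$ ($dm$ Lebesgue). For $f\in H$, $\langle f,\Delta\phi\rangle:=-\langle f,\phi_0\rangle_H$ (a centered Gaussian under $\mu$, defined a.e. via Paley–Wiener). $M_\phi=\,:\!e^{2\phi}\omega_0\!:$ is the Gaussian multiplicative chaos (a.s. weak limit of $e^{2\phi_\delta-2\mathbb E[\phi_\delta^2]}\omega_0$, $\phi_\delta$ circle averages), satisfying $M_{\phi+h}=e^{2h}M_\phi$ a.e. for fixed $h\in H$ (in particular $M_{m+\phi_0}=e^{2m}M_{\phi_0}$). The Liouville measure is $d\nu(\phi)=\exp(-\lambda\sigma^{-2}M_\phi(\Lambda))\,d\hat\mu(\phi)$. *)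

theory Defs
  imports "HOL-Probability.Probability"
begin

(* Flat torus Lambda = C/(Z + tau Z), realised on the fundamental domain
   P = {s + t tau : 0 <= s,t < 1} with Lebesgue measure (omega_0). *)
definition Pdom :: "complex \<Rightarrow> complex set" where
  "Pdom \<tau> = {of_real s + of_real t * \<tau> | s t. 0 \<le> s \<and> s < 1 \<and> 0 \<le> t \<and> t < 1}"

(* lattice coordinates: z = s + t tau *)
definition tcoord :: "complex \<Rightarrow> complex \<Rightarrow> real" where
  "tcoord \<tau> z = Im z / Im \<tau>"
definition scoord :: "complex \<Rightarrow> complex \<Rightarrow> real" where
  "scoord \<tau> z = Re z - tcoord \<tau> z * Re \<tau>"

(* eigenvalue of -Delta on the Fourier mode k = (m,n) *)
definition eig :: "complex \<Rightarrow> int \<times> int \<Rightarrow> real" where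
  "eig \<tau> k = (case k of (m, n) \<Rightarrow>
      4 * pi\<^sup>2 * ((real_of_int m)\<^sup>2 + ((real_of_int n - real_of_int m * Re \<tau>) / Im \<tau>)\<^sup>2))"

(* real L^2(omega_0)-orthonormal eigenbasis of -Delta on the mean-zero functions *)
definition psi :: "complex \<Rightarrow> int \<times> int \<Rightarrow> complex \<Rightarrow> real" where
  "psi \<tau> k z = (case k of (m, n) \<Rightarrow>
      sqrt (2 / Im \<tau>) *
      (if m > 0 \<or> (m = 0 \<and> n > 0) then cos else sin)
        (2 * pi * (real_of_int m * scoord \<tau> z + real_of_int n * tcoord \<tau> z)))"

definition box :: "nat \<Rightarrow> (int \<times> int) set" where
  "box N = {(m, n). \<bar>m\<bar> \<le> int N \<and> \<bar>n\<bar> \<le> int N \<and> (m, n) \<noteq> (0, 0)}"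

(* limit of the box partial sums (0 where the series diverges; only used a.e.) *)
definition series_lim :: "(int \<times> int \<Rightarrow> real) \<Rightarrow> real" where
  "series_lim g = (if convergent (\<lambda>N. \<Sum>k\<in>box N. g k) then lim (\<lambda>N. \<Sum>k\<in>box N. g k) else 0)"

(* The mean-zero GFF phi_0 = sum_k coef_k psi_k is parametrised by an i.i.d. standard
   Gaussian family xi; mu = law of xi. *)
definition gff_mu :: "(int \<times> int \<Rightarrow> real) measure" where
  "gff_mu = PiM UNIV (\<lambda>_. density lborel std_normal_density)"

definition coef :: "real \<Rightarrow> complex \<Rightarrow> (int \<times> int \<Rightarrow> real) \<Rightarrow> int \<times> int \<Rightarrow> real" where
  "coef \<sigma> \<tau> \<xi> k = sqrt (\<sigma>\<^sup>2 / (2 * eig \<tau> k)) * \<xi> k"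

(* a field phi = m + phi_0 is represented by the pair (m, xi);  mu_hat = dm (x) dmu *)
definition mu_hat :: "(real \<times> (int \<times> int \<Rightarrow> real)) measure" where
  "mu_hat = lborel \<Otimes>\<^sub>M gff_mu"

definition circ_avg :: "complex \<Rightarrow> int \<times> int \<Rightarrow> real \<Rightarrow> complex \<Rightarrow> real" where
  "circ_avg \<tau> k \<delta> z = (1 / (2 * pi)) * integral {0..2*pi} (\<lambda>\<theta>. psi \<tau> k (z + of_real \<delta> * cis \<theta>))"

definition circ_field :: "real \<Rightarrow> complex \<Rightarrow> (int \<times> int \<Rightarrow> real) \<Rightarrow> real \<Rightarrow> complex \<Rightarrow> real" where
  "circ_field \<sigma> \<tau> \<xi> \<delta> z = series_lim (\<lambda>k. coef \<sigma> \<tau> \<xi> k * circ_avg \<tau> k \<delta> z)"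

definition gmc_approx :: "real \<Rightarrow> complex \<Rightarrow> real \<Rightarrow> real \<times> (int \<times> int \<Rightarrow> real) \<Rightarrow> real" where
  "gmc_approx \<sigma> \<tau> \<delta> \<phi> =
     (LINT z:Pdom \<tau>|lborel. exp (2 * (fst \<phi> + circ_field \<sigma> \<tau> (snd \<phi>) \<delta> z)
        - 2 * (\<integral>\<xi>. (circ_field \<sigma> \<tau> \<xi> \<delta> z)\<^sup>2 \<partial>gff_mu)))"

(* M_phi(Lambda): total mass of the Gaussian multiplicative chaos, the limit along
   delta = 2^-n (0 where the limit does not exist; this is a null set) *)
definition gmc_mass :: "real \<Rightarrow> complex \<Rightarrow> real \<times> (int \<times> int \<Rightarrow> real) \<Rightarrow> real" where
  "gmc_mass \<sigma> \<tau> \<phi> =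
     (if convergent (\<lambda>n. gmc_approx \<sigma> \<tau> (1 / 2 ^ n) \<phi>)
      then lim (\<lambda>n. gmc_approx \<sigma> \<tau> (1 / 2 ^ n) \<phi>) else 0)"

definition liouville :: "real \<Rightarrow> complex \<Rightarrow> real \<Rightarrow> (real \<times> (int \<times> int \<Rightarrow> real)) measure" where
  "liouville \<sigma> \<tau> lmb = density mu_hat (\<lambda>\<phi>. ennreal (exp (- lmb / \<sigma>\<^sup>2 * gmc_mass \<sigma> \<tau> \<phi>)))"

definition fcoef :: "complex \<Rightarrow> (complex \<Rightarrow> real) \<Rightarrow> int \<times> int \<Rightarrow> real" where
  "fcoef \<tau> f k = (LINT z:Pdom \<tau>|lborel. f z * psi \<tau> k z)"

definition in_H :: "complex \<Rightarrow> (complex \<Rightarrow> real) \<Rightarrow> bool" where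
  "in_H \<tau> f \<longleftrightarrow> f \<in> borel_measurable lborel \<and> set_integrable lborel (Pdom \<tau>) (\<lambda>z. (f z)\<^sup>2)
     \<and> (\<lambda>k. eig \<tau> k * (fcoef \<tau> f k)\<^sup>2) summable_on (UNIV - {(0, 0)})"

(* <phi_0, f>_H  (Paley--Wiener), so that <f, Delta phi> = - H_pair *)
definition H_pair :: "real \<Rightarrow> complex \<Rightarrow> (complex \<Rightarrow> real) \<Rightarrow> real \<times> (int \<times> int \<Rightarrow> real) \<Rightarrow> real" where
  "H_pair \<sigma> \<tau> f \<phi> = series_lim (\<lambda>k. eig \<tau> k * fcoef \<tau> f k * coef \<sigma> \<tau> (snd \<phi>) k)"

definition f_Delta_phi :: "real \<Rightarrow> complex \<Rightarrow> (complex \<Rightarrow> real) \<Rightarrow> real \<times> (int \<times> int \<Rightarrow> real) \<Rightarrow> real" where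
  "f_Delta_phi \<sigma> \<tau> f \<phi> = - H_pair \<sigma> \<tau> f \<phi>"

definition in_Lp :: "'a measure \<Rightarrow> real \<Rightarrow> ('a \<Rightarrow> real) \<Rightarrow> bool" where
  "in_Lp M p g \<longleftrightarrow> g \<in> borel_measurable M \<and> integrable M (\<lambda>x. \<bar>g x\<bar> powr p)"

end

theory Submission
  imports Defs
begin


abbreviation "NN \<equiv> density lborel std_normal_density"

lemma mgf_std_normal:
  "(\<integral>\<^sup>+x. ennreal (exp (u * x)) \<partial>NN) = ennreal (exp (u\<^sup>2 / 2))"
proof -
  have eq: "std_normal_density x * exp (u * x) = exp (u\<^sup>2/2) * normal_density u 1 x" for x
    unfolding normal_density_def
    by (simp add: exp_add[symmetric] power2_eq_square algebra_simps) (simp add: field_simps)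
  have one: "(\<integral>\<^sup>+x. ennreal (normal_density u 1 x) \<partial>lborel) = 1"
  proof -
    interpret prob_space "density lborel (normal_density u 1)" by (rule prob_space_normal_density) simp
    have "emeasure (density lborel (normal_density u 1)) UNIV = 1"
      using emeasure_space_1 by simp
    then show ?thesis by (simp add: emeasure_density)
  qed
  have "(\<integral>\<^sup>+x. ennreal (exp (u * x)) \<partial>NN) = (\<integral>\<^sup>+x. ennreal (std_normal_density x) * ennreal (exp (u * x)) \<partial>lborel)"
    by (subst nn_integral_density) (auto simp: normal_density_nonneg)
  also have "\<dots> = (\<integral>\<^sup>+x. ennreal (exp (u\<^sup>2/2)) * ennreal (normal_density u 1 x) \<partial>lborel)"
    by (intro nn_integral_cong) (simp add: ennreal_mult[symmetric] normal_density_nonneg eq)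
  also have "\<dots> = ennreal (exp (u\<^sup>2/2))"
    by (subst nn_integral_cmult) (auto simp: one)
  finally show ?thesis .
qed



lemma prob_NN: "prob_space NN"
  by (rule prob_space_normal_density) simp

interpretation G: product_prob_space "\<lambda>_. NN" UNIV
  by (simp add: product_prob_space_def product_prob_space_axioms_def product_sigma_finite_def
      prob_NN prob_space_imp_sigma_finite)

lemma gff_prob: "prob_space gff_mu"
  unfolding gff_mu_def by (rule G.P.prob_space_axioms)

lemma mgf_finite_sum:
  assumes "finite J"
  shows "(\<integral>\<^sup>+\<xi>. ennreal (exp (\<Sum>k\<in>J. c k * \<xi> k)) \<partial>gff_mu) = ennreal (exp ((\<Sum>k\<in>J. (c k)\<^sup>2) / 2))"
proof -
  have "(\<integral>\<^sup>+\<xi>. ennreal (exp (\<Sum>k\<in>J. c k * \<xi> k)) \<partial>gff_mu)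
      = (\<integral>\<^sup>+\<xi>. (\<Prod>k\<in>J. ennreal (exp (c k * restrict \<xi> J k))) \<partial>PiM UNIV (\<lambda>_. NN))"
    unfolding gff_mu_def
    using assms by (intro nn_integral_cong) (simp add: exp_sum prod_ennreal)
  also have "\<dots> = (\<integral>\<^sup>+\<xi>. (\<Prod>k\<in>J. ennreal (exp (c k * \<xi> k))) \<partial>distr (PiM UNIV (\<lambda>_. NN)) (PiM J (\<lambda>_. NN)) (\<lambda>x. restrict x J))"
    by (subst nn_integral_distr) (auto intro!: measurable_restrict_subset)
  also have "\<dots> = (\<integral>\<^sup>+\<xi>. (\<Prod>k\<in>J. ennreal (exp (c k * \<xi> k))) \<partial>PiM J (\<lambda>_. NN))"
    using assms by (subst G.distr_PiM_restrict_finite) auto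
  also have "\<dots> = (\<Prod>k\<in>J. \<integral>\<^sup>+x. ennreal (exp (c k * x)) \<partial>NN)"
    using assms by (subst G.product_nn_integral_prod) auto
  also have "\<dots> = (\<Prod>k\<in>J. ennreal (exp ((c k)\<^sup>2/2)))"
    by (simp add: mgf_std_normal)
  also have "\<dots> = ennreal (exp ((\<Sum>k\<in>J. (c k)\<^sup>2) / 2))"
    using assms by (simp add: prod_ennreal exp_sum sum_divide_distrib)
  finally show ?thesis .
qed



lemma series_lim_measurable[measurable]:
  assumes [measurable]: "\<And>k. (\<lambda>x. g x k) \<in> borel_measurable M"
  shows "(\<lambda>x. series_lim (g x)) \<in> borel_measurable M"
proof -
  have [measurable]: "\<And>N. (\<lambda>x. \<Sum>k\<in>box N. g x k) \<in> borel_measurable M" by measurable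
  have "(\<lambda>x. series_lim (g x)) = (\<lambda>x. if Cauchy (\<lambda>N. \<Sum>k\<in>box N. g x k) then lim (\<lambda>N. \<Sum>k\<in>box N. g x k) else 0)"
    by (simp add: series_lim_def Cauchy_convergent_iff fun_eq_iff)
  also have "\<dots> \<in> borel_measurable M"
  proof (rule measurable_If)
    show "{x \<in> space M. Cauchy (\<lambda>N. \<Sum>k\<in>box N. g x k)} \<in> sets M" by measurable
  qed measurable
  finally show ?thesis .
qed

lemma lim_if_measurable:
  fixes g :: "nat \<Rightarrow> 'a \<Rightarrow> real"
  assumes [measurable]: "\<And>n. g n \<in> borel_measurable M"
  shows "(\<lambda>x. if convergent (\<lambda>n. g n x) then lim (\<lambda>n. g n x) else 0) \<in> borel_measurable M"
  apply (simp only: Cauchy_convergent_iff[symmetric])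
proof (rule measurable_If)
  show "{x \<in> space M. Cauchy (\<lambda>n. g n x)} \<in> sets M" by measurable
qed measurable

lemma xi_meas[measurable]: "(\<lambda>\<xi>. \<xi> k) \<in> borel_measurable gff_mu"
proof -
  have "(\<lambda>\<xi>. \<xi> k) \<in> measurable (PiM UNIV (\<lambda>_. NN)) NN"
    by (rule measurable_component_singleton) simp
  then show ?thesis unfolding gff_mu_def
    using measurable_cong_sets[OF refl, of NN borel] by simp
qed

lemma exp_lim_le_liminf:
  fixes a :: real and s :: "nat \<Rightarrow> real"
  assumes "a \<ge> 0"
  shows "ennreal (exp (a * \<bar>if convergent s then lim s else 0\<bar>)) \<le> liminf (\<lambda>n. ennreal (exp (a * \<bar>s n\<bar>)))"
proof (cases "convergent s")
  case True
  then have "s \<longlonglongrightarrow> lim s" by (simp add: convergent_LIMSEQ_iff)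
  then have "(\<lambda>n. ennreal (exp (a * \<bar>s n\<bar>))) \<longlonglongrightarrow> ennreal (exp (a * \<bar>lim s\<bar>))"
    by (intro tendsto_ennrealI tendsto_intros)
  then have "liminf (\<lambda>n. ennreal (exp (a * \<bar>s n\<bar>))) = ennreal (exp (a * \<bar>lim s\<bar>))"
    by (intro lim_imp_Liminf) auto
  with True show ?thesis by simp
next
  case False
  have "ennreal 1 \<le> liminf (\<lambda>n. ennreal (exp (a * \<bar>s n\<bar>)))"
    by (intro Liminf_bounded always_eventually allI ennreal_leI) (simp add: assms)
  with False show ?thesis by simp
qed

lemma exp_abs_moment_series:
  fixes c :: "int \<times> int \<Rightarrow> real" and a V :: real
  assumes "a \<ge> 0" and V: "\<And>N. (\<Sum>k\<in>box N. (c k)\<^sup>2) \<le> V"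
  shows "(\<integral>\<^sup>+\<xi>. ennreal (exp (a * \<bar>series_lim (\<lambda>k. c k * \<xi> k)\<bar>)) \<partial>gff_mu) \<le> ennreal (2 * exp (a\<^sup>2 * V / 2))"
proof -
  have fin: "finite (box N)" for N
    by (rule finite_subset[of _ "{-int N..int N} \<times> {-int N..int N}"]) (auto simp: box_def)
  let ?S = "\<lambda>N \<xi>. \<Sum>k\<in>box N. c k * \<xi> k"
  have "(\<integral>\<^sup>+\<xi>. ennreal (exp (a * \<bar>series_lim (\<lambda>k. c k * \<xi> k)\<bar>)) \<partial>gff_mu)
     \<le> (\<integral>\<^sup>+\<xi>. liminf (\<lambda>N. ennreal (exp (a * \<bar>?S N \<xi>\<bar>))) \<partial>gff_mu)"
    unfolding series_lim_def by (intro nn_integral_mono exp_lim_le_liminf assms)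
  also have "\<dots> \<le> liminf (\<lambda>N. \<integral>\<^sup>+\<xi>. ennreal (exp (a * \<bar>?S N \<xi>\<bar>)) \<partial>gff_mu)"
    by (intro nn_integral_liminf) measurable
  also have "\<dots> \<le> ennreal (2 * exp (a\<^sup>2 * V / 2))"
  proof (intro Liminf_le always_eventually allI)
    fix N
    have "(\<integral>\<^sup>+\<xi>. ennreal (exp (a * \<bar>?S N \<xi>\<bar>)) \<partial>gff_mu)
        \<le> (\<integral>\<^sup>+\<xi>. ennreal (exp (\<Sum>k\<in>box N. (a * c k) * \<xi> k)) + ennreal (exp (\<Sum>k\<in>box N. (- a * c k) * \<xi> k)) \<partial>gff_mu)"
    proof (intro nn_integral_mono)
      fix \<xi>
      have "exp (a * \<bar>?S N \<xi>\<bar>) \<le> exp (a * ?S N \<xi>) + exp (- (a * ?S N \<xi>))"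
        by (cases "?S N \<xi> \<ge> 0") (auto simp: abs_if)
      moreover have "a * ?S N \<xi> = (\<Sum>k\<in>box N. (a * c k) * \<xi> k)"
        by (simp add: sum_distrib_left mult.assoc)
      moreover have "- (a * ?S N \<xi>) = (\<Sum>k\<in>box N. (- a * c k) * \<xi> k)"
        by (simp add: sum_distrib_left sum_negf mult.assoc)
      ultimately show "ennreal (exp (a * \<bar>?S N \<xi>\<bar>)) \<le> ennreal (exp (\<Sum>k\<in>box N. (a * c k) * \<xi> k)) + ennreal (exp (\<Sum>k\<in>box N. (- a * c k) * \<xi> k))"
        by (simp add: ennreal_plus[symmetric] del: ennreal_plus)
    qed
    also have "\<dots> = ennreal (exp ((\<Sum>k\<in>box N. (a * c k)\<^sup>2) / 2)) + ennreal (exp ((\<Sum>k\<in>box N. (- a * c k)\<^sup>2) / 2))"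
      using mgf_finite_sum[OF fin, of "\<lambda>k. a * c k"] mgf_finite_sum[OF fin, of "\<lambda>k. - a * c k"]
      by (subst nn_integral_add) auto
    also have "\<dots> = ennreal (2 * exp (a\<^sup>2 * (\<Sum>k\<in>box N. (c k)\<^sup>2) / 2))"
      by (simp add: power_mult_distrib sum_distrib_left ennreal_plus[symmetric] del: ennreal_plus)
    also have "\<dots> \<le> ennreal (2 * exp (a\<^sup>2 * V / 2))"
      using V[of N] by (intro ennreal_leI) (simp add: mult_left_mono)
    finally show "(\<integral>\<^sup>+\<xi>. ennreal (exp (a * \<bar>?S N \<xi>\<bar>)) \<partial>gff_mu) \<le> ennreal (2 * exp (a\<^sup>2 * V / 2))" .
  qed simp
  finally show ?thesis .
qed



lemma tcoord_meas[measurable]: "tcoord \<tau> \<in> borel_measurable borel"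
  unfolding tcoord_def[abs_def] by measurable
lemma scoord_meas[measurable]: "scoord \<tau> \<in> borel_measurable borel"
  unfolding scoord_def[abs_def] by measurable

lemma tcoord_alt: "tcoord \<tau> = (\<lambda>z. inverse (Im \<tau>) * Im z)"
  by (auto simp: tcoord_def fun_eq_iff divide_inverse)
lemma cont_tcoord: "continuous_on UNIV (tcoord \<tau>)"
  unfolding tcoord_alt by (intro continuous_intros)
lemma cont_scoord: "continuous_on UNIV (scoord \<tau>)"
  unfolding scoord_def[abs_def] tcoord_alt by (intro continuous_intros)

lemma cont_psi: "continuous_on UNIV (psi \<tau> k)"
proof -
  obtain m n where k: "k = (m, n)" by (cases k)
  show ?thesis
  proof -
    let ?L = "\<lambda>z. 2 * pi * (real_of_int m * scoord \<tau> z + real_of_int n * tcoord \<tau> z)"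
    have L: "continuous_on UNIV ?L"
      by (intro continuous_intros cont_scoord cont_tcoord)
    have "continuous_on UNIV (\<lambda>z. sqrt (2 / Im \<tau>) * (if m > 0 \<or> (m = 0 \<and> n > 0) then cos else sin) (?L z))"
      by (cases "m > 0 \<or> (m = 0 \<and> n > 0)") (auto simp add: continuous_on_mult_left continuous_on_cos[OF L] continuous_on_sin[OF L])
    then show ?thesis unfolding k psi_def[abs_def] by simp
  qed
qed

lemma psi_meas[measurable]: "psi \<tau> k \<in> borel_measurable borel"
  by (rule borel_measurable_continuous_onI[OF cont_psi])

lemma Pdom_eq:
  assumes "Im \<tau> > 0"
  shows "Pdom \<tau> = {z. 0 \<le> scoord \<tau> z \<and> scoord \<tau> z < 1 \<and> 0 \<le> tcoord \<tau> z \<and> tcoord \<tau> z < 1}"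
proof (intro set_eqI iffI)
  fix z assume "z \<in> Pdom \<tau>"
  then obtain s t where st: "0 \<le> s" "s < 1" "0 \<le> t" "t < 1" "z = of_real s + of_real t * \<tau>"
    unfolding Pdom_def by blast
  have "tcoord \<tau> z = t" using assms st(5) by (simp add: tcoord_def)
  moreover have "scoord \<tau> z = s" using assms st(5) by (simp add: scoord_def tcoord_def)
  ultimately show "z \<in> {z. 0 \<le> scoord \<tau> z \<and> scoord \<tau> z < 1 \<and> 0 \<le> tcoord \<tau> z \<and> tcoord \<tau> z < 1}"
    using st by simp
next
  fix z assume z: "z \<in> {z. 0 \<le> scoord \<tau> z \<and> scoord \<tau> z < 1 \<and> 0 \<le> tcoord \<tau> z \<and> tcoord \<tau> z < 1}"
  have "z = of_real (scoord \<tau> z) + of_real (tcoord \<tau> z) * \<tau>"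
    using assms by (intro complex_eqI) (simp_all add: scoord_def tcoord_def)
  with z show "z \<in> Pdom \<tau>" unfolding Pdom_def by blast
qed

lemma Pdom_sets[measurable]:
  assumes "Im \<tau> > 0"
  shows "Pdom \<tau> \<in> sets lborel"
  unfolding Pdom_eq[OF assms] by measurable



lemma cis_meas[measurable]: "cis \<in> borel_measurable borel"
  by (rule borel_measurable_continuous_onI) (intro continuous_intros)

lemma circ_avg_alt:
  "circ_avg \<tau> k \<delta> z = (1 / (2 * pi)) * (LINT \<theta>|lborel. indicator {0..2*pi} \<theta> *\<^sub>R psi \<tau> k (z + of_real \<delta> * cis \<theta>))"
proof -
  have c: "continuous_on {0..2*pi} (\<lambda>\<theta>. psi \<tau> k (z + of_real \<delta> * cis \<theta>))"
    by (rule continuous_on_compose2[OF cont_psi]) (auto intro!: continuous_intros)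
  have "set_integrable lborel {0..2*pi} (\<lambda>\<theta>. psi \<tau> k (z + of_real \<delta> * cis \<theta>))"
    unfolding set_integrable_def by (rule borel_integrable_compact[OF _ c]) simp
  from set_borel_integral_eq_integral(2)[OF this] show ?thesis
    unfolding circ_avg_def set_lebesgue_integral_def by simp
qed

lemma circ_avg_meas[measurable]: "circ_avg \<tau> k \<delta> \<in> borel_measurable borel"
proof -
  have "(\<lambda>z. LINT \<theta>|lborel. indicator {0..2*pi} \<theta> *\<^sub>R psi \<tau> k (z + of_real \<delta> * cis \<theta>)) \<in> borel_measurable borel"
    by (rule lborel.borel_measurable_lebesgue_integral) measurable
  then show ?thesis unfolding circ_avg_alt[abs_def] by measurable
qed



lemma gff_sf: "sigma_finite_measure gff_mu"
  using gff_prob by (rule prob_space_imp_sigma_finite)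

lemma circ_field_meas0: "(\<lambda>p. circ_field \<sigma> \<tau> (fst p) \<delta> (snd p)) \<in> borel_measurable (gff_mu \<Otimes>\<^sub>M lborel)"
  unfolding circ_field_def coef_def by (rule series_lim_measurable) measurable

lemma circ_field_meas[measurable (raw)]:
  assumes "f \<in> measurable M gff_mu" "g \<in> measurable M lborel"
  shows "(\<lambda>x. circ_field \<sigma> \<tau> (f x) \<delta> (g x)) \<in> borel_measurable M"
  using measurable_compose[OF measurable_Pair[OF assms] circ_field_meas0] by simp

lemma var_meas[measurable]: "(\<lambda>z. \<integral>\<xi>. (circ_field \<sigma> \<tau> \<xi> \<delta> z)\<^sup>2 \<partial>gff_mu) \<in> borel_measurable lborel"
  by (rule sigma_finite_measure.borel_measurable_lebesgue_integral[OF gff_sf]) measurable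

lemma gmc_approx_meas[measurable]:
  assumes "Im \<tau> > 0"
  shows "gmc_approx \<sigma> \<tau> \<delta> \<in> borel_measurable mu_hat"
proof -
  note Pdom_sets[OF assms, measurable]
  show ?thesis
    unfolding gmc_approx_def[abs_def] set_lebesgue_integral_def
    by (rule lborel.borel_measurable_lebesgue_integral) (unfold mu_hat_def, measurable)
qed

lemma gmc_mass_meas[measurable]:
  assumes "Im \<tau> > 0"
  shows "gmc_mass \<sigma> \<tau> \<in> borel_measurable mu_hat"
  unfolding gmc_mass_def[abs_def]
  by (rule lim_if_measurable) (rule gmc_approx_meas[OF assms])



lemma gmc_approx_scale:
  "gmc_approx \<sigma> \<tau> \<delta> (m, \<xi>) = exp (2*m) * gmc_approx \<sigma> \<tau> \<delta> (0, \<xi>)"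
proof -
  have *: "(\<lambda>z. exp (2 * (m + circ_field \<sigma> \<tau> \<xi> \<delta> z) - 2 * (\<integral>\<xi>. (circ_field \<sigma> \<tau> \<xi> \<delta> z)\<^sup>2 \<partial>gff_mu)))
    = (\<lambda>z. exp (2*m) * exp (2 * (0 + circ_field \<sigma> \<tau> \<xi> \<delta> z) - 2 * (\<integral>\<xi>. (circ_field \<sigma> \<tau> \<xi> \<delta> z)\<^sup>2 \<partial>gff_mu)))"
    by (simp add: fun_eq_iff exp_add[symmetric] algebra_simps)
  show ?thesis unfolding gmc_approx_def fst_conv snd_conv
    by (subst *) (rule set_integral_mult_right)
qed

lemma gmc_mass_scale:
  "gmc_mass \<sigma> \<tau> (m, \<xi>) = exp (2*m) * gmc_mass \<sigma> \<tau> (0, \<xi>)"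
proof -
  let ?s = "\<lambda>n. gmc_approx \<sigma> \<tau> (1 / 2 ^ n) (0, \<xi>)"
  have c: "exp (2*m) \<noteq> 0" by simp
  show ?thesis
  proof (cases "convergent ?s")
    case True
    then have "?s \<longlonglongrightarrow> lim ?s" by (simp add: convergent_LIMSEQ_iff)
    then have "(\<lambda>n. exp (2*m) * ?s n) \<longlonglongrightarrow> exp (2*m) * lim ?s" by (intro tendsto_mult_left)
    then have "lim (\<lambda>n. exp (2*m) * ?s n) = exp (2*m) * lim ?s" by (rule limI)
    with True show ?thesis
      unfolding gmc_mass_def gmc_approx_scale[of _ _ _ m]
      by (simp add: convergent_mult_const_iff[OF c])
  next
    case False
    then show ?thesis
      unfolding gmc_mass_def gmc_approx_scale[of _ _ _ m]
      by (simp add: convergent_mult_const_iff[OF c])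
  qed
qed

lemma gmc_approx_nonneg: "0 \<le> gmc_approx \<sigma> \<tau> \<delta> \<phi>"
  unfolding gmc_approx_def set_lebesgue_integral_def
  by (rule integral_nonneg_AE) (simp add: indicator_def)

lemma gmc_mass_nonneg: "0 \<le> gmc_mass \<sigma> \<tau> \<phi>"
proof -
  let ?s = "\<lambda>n. gmc_approx \<sigma> \<tau> (1 / 2 ^ n) \<phi>"
  { assume "convergent ?s"
    then have "?s \<longlonglongrightarrow> lim ?s" by (simp add: convergent_LIMSEQ_iff)
    then have "0 \<le> lim ?s" by (rule LIMSEQ_le_const) (auto intro: gmc_approx_nonneg) }
  then show ?thesis unfolding gmc_mass_def by auto
qed

lemma fiber_bound:
  fixes G \<epsilon> :: real
  assumes "0 < \<epsilon>" "\<epsilon> < 1"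
  shows "emeasure lborel {m::real. \<epsilon> \<le> exp (2*m) * G \<and> exp (2*m) * G \<le> 1/\<epsilon>} \<le> ennreal (- ln \<epsilon>)"
proof (cases "G > 0")
  case False
  then have e: "{m::real. \<epsilon> \<le> exp (2*m) * G \<and> exp (2*m) * G \<le> 1/\<epsilon>} = {}"
    using assms by (auto simp: mult_le_0_iff not_less) (smt (verit) exp_gt_zero mult_nonneg_nonpos)
  show ?thesis unfolding e by simp
next
  case True
  let ?a = "(ln \<epsilon> - ln G) / 2" and ?b = "(- ln \<epsilon> - ln G) / 2"
  have sub: "{m::real. \<epsilon> \<le> exp (2*m) * G \<and> exp (2*m) * G \<le> 1/\<epsilon>} \<subseteq> {?a..?b}"
  proof
    fix m assume m: "m \<in> {m::real. \<epsilon> \<le> exp (2*m) * G \<and> exp (2*m) * G \<le> 1/\<epsilon>}"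
    have pos: "0 < exp (2*m) * G" using True by simp
    have "ln \<epsilon> \<le> ln (exp (2*m) * G)" using m assms pos by (subst ln_le_cancel_iff) auto
    moreover have "ln (exp (2*m) * G) \<le> ln (1/\<epsilon>)" using m assms pos by (subst ln_le_cancel_iff) auto
    moreover have "ln (exp (2*m) * G) = 2*m + ln G" using True by (simp add: ln_mult)
    moreover have "ln (1/\<epsilon>) = - ln \<epsilon>" using assms by (simp add: ln_div)
    ultimately show "m \<in> {?a..?b}" by auto
  qed
  have "?a \<le> ?b" using assms by simp
  have "emeasure lborel {m::real. \<epsilon> \<le> exp (2*m) * G \<and> exp (2*m) * G \<le> 1/\<epsilon>} \<le> emeasure lborel {?a..?b}"
    by (rule emeasure_mono[OF sub]) simp
  also have "\<dots> = ennreal (- ln \<epsilon>)"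
    using \<open>?a \<le> ?b\<close> by (simp add: field_simps)
  finally show ?thesis .
qed

interpretation PS: pair_sigma_finite lborel gff_mu
  by (simp add: pair_sigma_finite_def gff_sf lborel.sigma_finite_measure_axioms)

lemma slice_bound:
  assumes tau: "Im \<tau> > 0" and e: "0 < \<epsilon>" "\<epsilon> < 1"
    and h[measurable]: "h \<in> borel_measurable gff_mu"
  shows "(\<integral>\<^sup>+\<phi>. h (snd \<phi>) * indicator {\<epsilon>..1/\<epsilon>} (gmc_mass \<sigma> \<tau> \<phi>) \<partial>mu_hat)
     \<le> ennreal (- ln \<epsilon>) * (\<integral>\<^sup>+\<xi>. h \<xi> \<partial>gff_mu)"
proof -
  note gm = gmc_mass_meas[OF tau, unfolded mu_hat_def, measurable]
  have "(\<integral>\<^sup>+\<phi>. h (snd \<phi>) * indicator {\<epsilon>..1/\<epsilon>} (gmc_mass \<sigma> \<tau> \<phi>) \<partial>mu_hat)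
     = (\<integral>\<^sup>+\<xi>. \<integral>\<^sup>+m. h \<xi> * indicator {\<epsilon>..1/\<epsilon>} (gmc_mass \<sigma> \<tau> (m, \<xi>)) \<partial>lborel \<partial>gff_mu)"
  proof -
    have meas: "(\<lambda>\<phi>. h (snd \<phi>) * indicator {\<epsilon>..1/\<epsilon>} (gmc_mass \<sigma> \<tau> \<phi>)) \<in> borel_measurable (lborel \<Otimes>\<^sub>M gff_mu)"
    proof -
      have m1: "(\<lambda>\<phi>. h (snd \<phi>)) \<in> borel_measurable (lborel \<Otimes>\<^sub>M gff_mu)"
        by (rule measurable_compose[OF measurable_snd h])
      have m2: "(\<lambda>\<phi>. indicator {\<epsilon>..1/\<epsilon>} (gmc_mass \<sigma> \<tau> \<phi>) :: ennreal) \<in> borel_measurable (lborel \<Otimes>\<^sub>M gff_mu)"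
        by (rule measurable_compose[OF gm borel_measurable_indicator]) simp
      show ?thesis by (rule borel_measurable_times_ennreal[OF m1 m2])
    qed
    show ?thesis using PS.nn_integral_snd[OF meas] by (simp add: mu_hat_def)
  qed
  also have "\<dots> \<le> (\<integral>\<^sup>+\<xi>. h \<xi> * ennreal (- ln \<epsilon>) \<partial>gff_mu)"
  proof (intro nn_integral_mono)
    fix \<xi>
    let ?A = "{m::real. \<epsilon> \<le> exp (2*m) * gmc_mass \<sigma> \<tau> (0, \<xi>) \<and> exp (2*m) * gmc_mass \<sigma> \<tau> (0, \<xi>) \<le> 1/\<epsilon>}"
    have A: "?A \<in> sets lborel"
    proof -
      have c: "(\<lambda>m::real. exp (2*m) * gmc_mass \<sigma> \<tau> (0, \<xi>)) \<in> borel_measurable borel"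
        by (intro borel_measurable_continuous_onI continuous_intros)
      have "?A = (\<lambda>m::real. exp (2*m) * gmc_mass \<sigma> \<tau> (0, \<xi>)) -` {\<epsilon>..1/\<epsilon>} \<inter> space borel" by auto
      also have "\<dots> \<in> sets borel" by (rule measurable_sets[OF c]) simp
      finally show ?thesis by simp
    qed
    have "(\<integral>\<^sup>+m. h \<xi> * indicator {\<epsilon>..1/\<epsilon>} (gmc_mass \<sigma> \<tau> (m, \<xi>)) \<partial>lborel) = (\<integral>\<^sup>+m. h \<xi> * indicator ?A m \<partial>lborel)"
      by (intro nn_integral_cong) (subst gmc_mass_scale, simp add: indicator_def)
    also have "\<dots> = h \<xi> * emeasure lborel ?A" by (rule nn_integral_cmult_indicator[OF A])
    also have "\<dots> \<le> h \<xi> * ennreal (- ln \<epsilon>)" by (intro mult_left_mono fiber_bound e) simp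
    finally show "(\<integral>\<^sup>+m. h \<xi> * indicator {\<epsilon>..1/\<epsilon>} (gmc_mass \<sigma> \<tau> (m, \<xi>)) \<partial>lborel) \<le> h \<xi> * ennreal (- ln \<epsilon>)" .
  qed
  also have "\<dots> = ennreal (- ln \<epsilon>) * (\<integral>\<^sup>+\<xi>. h \<xi> \<partial>gff_mu)"
    by (subst nn_integral_multc) (auto simp: mult.commute)
  finally show ?thesis .
qed



definition cH :: "real \<Rightarrow> complex \<Rightarrow> (complex \<Rightarrow> real) \<Rightarrow> int \<times> int \<Rightarrow> real" where
  "cH \<sigma> \<tau> f k = eig \<tau> k * fcoef \<tau> f k * sqrt (\<sigma>\<^sup>2 / (2 * eig \<tau> k))"

lemma H_pair_alt: "H_pair \<sigma> \<tau> f \<phi> = series_lim (\<lambda>k. cH \<sigma> \<tau> f k * snd \<phi> k)"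
  unfolding H_pair_def coef_def cH_def by (simp add: mult.assoc)

lemma eig_nonneg: "0 \<le> eig \<tau> k"
  unfolding eig_def by (cases k) simp

lemma cH_sq: "(cH \<sigma> \<tau> f k)\<^sup>2 = \<sigma>\<^sup>2 / 2 * (eig \<tau> k * (fcoef \<tau> f k)\<^sup>2)"
proof (cases "eig \<tau> k = 0")
  case True then show ?thesis by (simp add: cH_def)
next
  case False
  have e: "0 < eig \<tau> k" using False eig_nonneg[of \<tau> k] by simp
  have "(cH \<sigma> \<tau> f k)\<^sup>2 = (eig \<tau> k)\<^sup>2 * (fcoef \<tau> f k)\<^sup>2 * (\<sigma>\<^sup>2 / (2 * eig \<tau> k))"
    unfolding cH_def using e by (simp add: power_mult_distrib)
  also have "\<dots> = \<sigma>\<^sup>2 / 2 * (eig \<tau> k * (fcoef \<tau> f k)\<^sup>2)"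
    using e by (simp add: power2_eq_square field_simps)
  finally show ?thesis .
qed

lemma cH_sum_bound:
  assumes "in_H \<tau> f"
  shows "(\<Sum>k\<in>box N. (cH \<sigma> \<tau> f k)\<^sup>2) \<le> \<sigma>\<^sup>2 / 2 * infsum (\<lambda>k. eig \<tau> k * (fcoef \<tau> f k)\<^sup>2) (UNIV - {(0, 0)})"
proof -
  have fin: "finite (box N)"
    by (rule finite_subset[of _ "{-int N..int N} \<times> {-int N..int N}"]) (auto simp: box_def)
  have sm: "(\<lambda>k. eig \<tau> k * (fcoef \<tau> f k)\<^sup>2) summable_on (UNIV - {(0, 0)})"
    using assms unfolding in_H_def by blast
  have "(\<Sum>k\<in>box N. eig \<tau> k * (fcoef \<tau> f k)\<^sup>2) \<le> infsum (\<lambda>k. eig \<tau> k * (fcoef \<tau> f k)\<^sup>2) (UNIV - {(0, 0)})"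
    by (rule finite_sum_le_infsum[OF sm fin]) (auto simp: box_def eig_nonneg)
  then have "\<sigma>\<^sup>2 / 2 * (\<Sum>k\<in>box N. eig \<tau> k * (fcoef \<tau> f k)\<^sup>2) \<le> \<sigma>\<^sup>2 / 2 * infsum (\<lambda>k. eig \<tau> k * (fcoef \<tau> f k)\<^sup>2) (UNIV - {(0, 0)})"
    by (intro mult_left_mono) auto
  then show ?thesis
    by (simp only: cH_sq sum_distrib_left)
qed

lemma H_meas[measurable]: "H_pair \<sigma> \<tau> f \<in> borel_measurable mu_hat"
  unfolding H_pair_def[abs_def] coef_def mu_hat_def by (rule series_lim_measurable) measurable

lemma H_moment:
  assumes "in_H \<tau> f" "a \<ge> 0"
  shows "(\<integral>\<^sup>+\<xi>. ennreal (exp (a * \<bar>H_pair \<sigma> \<tau> f (0, \<xi>)\<bar>)) \<partial>gff_mu) < \<infinity>"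
proof -
  have "(\<integral>\<^sup>+\<xi>. ennreal (exp (a * \<bar>H_pair \<sigma> \<tau> f (0, \<xi>)\<bar>)) \<partial>gff_mu)
     \<le> ennreal (2 * exp (a\<^sup>2 * (\<sigma>\<^sup>2 / 2 * infsum (\<lambda>k. eig \<tau> k * (fcoef \<tau> f k)\<^sup>2) (UNIV - {(0, 0)})) / 2))"
    unfolding H_pair_alt snd_conv
    by (rule exp_abs_moment_series[OF assms(2) cH_sum_bound[OF assms(1)]])
  also have "\<dots> < \<infinity>" by simp
  finally show ?thesis .
qed

lemma exp_int_mu_hat:
  assumes tau: "Im \<tau> > 0" and f: "in_H \<tau> f" and a: "a \<ge> 0" and e: "0 < \<epsilon>" "\<epsilon> < 1"
  shows "integrable mu_hat (\<lambda>\<phi>. exp (a * \<bar>H_pair \<sigma> \<tau> f \<phi>\<bar>) * indicator {\<epsilon>..1/\<epsilon>} (gmc_mass \<sigma> \<tau> \<phi>))"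
proof (rule integrableI_bounded)
  note gmc_mass_meas[OF tau, measurable]
  show "(\<lambda>\<phi>. exp (a * \<bar>H_pair \<sigma> \<tau> f \<phi>\<bar>) * indicator {\<epsilon>..1/\<epsilon>} (gmc_mass \<sigma> \<tau> \<phi>)) \<in> borel_measurable mu_hat"
    by measurable
  have hm: "(\<lambda>\<xi>. ennreal (exp (a * \<bar>H_pair \<sigma> \<tau> f (0, \<xi>)\<bar>))) \<in> borel_measurable gff_mu"
    unfolding H_pair_alt snd_conv by measurable
  have "(\<integral>\<^sup>+\<phi>. ennreal (norm (exp (a * \<bar>H_pair \<sigma> \<tau> f \<phi>\<bar>) * indicator {\<epsilon>..1/\<epsilon>} (gmc_mass \<sigma> \<tau> \<phi>))) \<partial>mu_hat)
     = (\<integral>\<^sup>+\<phi>. ennreal (exp (a * \<bar>H_pair \<sigma> \<tau> f (0, snd \<phi>)\<bar>)) * indicator {\<epsilon>..1/\<epsilon>} (gmc_mass \<sigma> \<tau> \<phi>) \<partial>mu_hat)"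
    by (intro nn_integral_cong) (simp add: H_pair_alt indicator_def)
  also have "\<dots> \<le> ennreal (- ln \<epsilon>) * (\<integral>\<^sup>+\<xi>. ennreal (exp (a * \<bar>H_pair \<sigma> \<tau> f (0, \<xi>)\<bar>)) \<partial>gff_mu)"
    by (rule slice_bound[OF tau e hm])
  also have "\<dots> < \<infinity>"
    using H_moment[OF f a, of \<sigma>] by (simp add: ennreal_mult_less_top)
  finally show "(\<integral>\<^sup>+\<phi>. ennreal (norm (exp (a * \<bar>H_pair \<sigma> \<tau> f \<phi>\<bar>) * indicator {\<epsilon>..1/\<epsilon>} (gmc_mass \<sigma> \<tau> \<phi>))) \<partial>mu_hat) < \<infinity>" .
qed



lemma powr_le_exp:
  fixes x p :: real
  assumes "0 \<le> x" "0 < p"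
  shows "x powr p \<le> p powr p * exp x"
proof -
  have "x / p \<le> exp (x / p)" using exp_ge_add_one_self[of "x/p"] by linarith
  then have "x \<le> p * exp (x / p)" using assms by (simp add: field_simps)
  then have "x powr p \<le> (p * exp (x / p)) powr p"
    using assms by (intro powr_mono2) auto
  also have "\<dots> = p powr p * exp (x / p) powr p"
    using assms by (simp add: powr_mult)
  also have "exp (x / p) powr p = exp x"
    using assms by (simp add: powr_def)
  finally show ?thesis .
qed

lemma liou_dens_le1:
  assumes "lmb \<ge> 0"
  shows "exp (- lmb / \<sigma>\<^sup>2 * gmc_mass \<sigma> \<tau> \<phi>) \<le> 1"
proof -
  have "0 \<le> lmb / \<sigma>\<^sup>2 * gmc_mass \<sigma> \<tau> \<phi>"
    using assms gmc_mass_nonneg by simp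
  then show ?thesis by simp
qed

lemma liou_meas[measurable]:
  assumes "Im \<tau> > 0"
  shows "(\<lambda>\<phi>. exp (- lmb / \<sigma>\<^sup>2 * gmc_mass \<sigma> \<tau> \<phi>)) \<in> borel_measurable mu_hat"
  using gmc_mass_meas[OF assms] by measurable

lemma sets_liou[simp, measurable_cong]: "sets (liouville \<sigma> \<tau> lmb) = sets mu_hat"
  unfolding liouville_def by simp

lemma space_liou[simp]: "space (liouville \<sigma> \<tau> lmb) = space mu_hat"
  unfolding liouville_def by simp

lemma liou_le:
  assumes tau: "Im \<tau> > 0" and l: "lmb \<ge> 0" and X: "X \<in> sets mu_hat"
  shows "emeasure (liouville \<sigma> \<tau> lmb) X \<le> emeasure mu_hat X"
proof -
  have "emeasure (liouville \<sigma> \<tau> lmb) X = (\<integral>\<^sup>+\<phi>. ennreal (exp (- lmb / \<sigma>\<^sup>2 * gmc_mass \<sigma> \<tau> \<phi>)) * indicator X \<phi> \<partial>mu_hat)"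
    unfolding liouville_def using liou_meas[OF tau] X by (subst emeasure_density) auto
  also have "\<dots> \<le> (\<integral>\<^sup>+\<phi>. indicator X \<phi> \<partial>mu_hat)"
  proof (intro nn_integral_mono)
    fix \<phi>
    have d: "ennreal (exp (- lmb / \<sigma>\<^sup>2 * gmc_mass \<sigma> \<tau> \<phi>)) \<le> 1"
      using ennreal_leI[OF liou_dens_le1[OF l]] by simp
    show "ennreal (exp (- lmb / \<sigma>\<^sup>2 * gmc_mass \<sigma> \<tau> \<phi>)) * indicator X \<phi> \<le> indicator X \<phi>"
      using d by (cases "\<phi> \<in> X") simp_all
  qed
  also have "\<dots> = emeasure mu_hat X" using X by simp
  finally show ?thesis .
qed

lemma liou_integrable:
  fixes g :: "_ \<Rightarrow> real"
  assumes tau: "Im \<tau> > 0" and l: "lmb \<ge> 0" and g: "integrable mu_hat g"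
  shows "integrable (liouville \<sigma> \<tau> lmb) g"
proof -
  have gm[measurable]: "g \<in> borel_measurable mu_hat" using g by simp
  note liou_meas[OF tau, measurable]
  have "integrable mu_hat (\<lambda>\<phi>. exp (- lmb / \<sigma>\<^sup>2 * gmc_mass \<sigma> \<tau> \<phi>) *\<^sub>R g \<phi>)"
  proof (rule Bochner_Integration.integrable_bound[OF g])
    show "(\<lambda>\<phi>. exp (- lmb / \<sigma>\<^sup>2 * gmc_mass \<sigma> \<tau> \<phi>) *\<^sub>R g \<phi>) \<in> borel_measurable mu_hat" by measurable
    show "AE \<phi> in mu_hat. norm (exp (- lmb / \<sigma>\<^sup>2 * gmc_mass \<sigma> \<tau> \<phi>) *\<^sub>R g \<phi>) \<le> norm (g \<phi>)"
      using liou_dens_le1[OF l] by (auto simp: abs_mult intro!: mult_left_le_one_le)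
  qed
  then show ?thesis
    unfolding liouville_def by (subst integrable_density[OF gm liou_meas[OF tau]]) auto
qed

lemma sf_liou:
  assumes tau: "Im \<tau> > 0" and l: "lmb \<ge> 0"
  shows "sigma_finite_measure (liouville \<sigma> \<tau> lmb)"
proof -
  interpret S: sigma_finite_measure mu_hat unfolding mu_hat_def by (rule PS.sigma_finite_measure_axioms)
  obtain A where A: "countable A" "A \<subseteq> sets mu_hat" "\<Union>A = space mu_hat" "\<forall>a\<in>A. emeasure mu_hat a \<noteq> \<infinity>"
    using S.sigma_finite_countable by blast
  show ?thesis
  proof (unfold_locales, intro exI[of _ A] conjI)
    show "\<forall>a\<in>A. emeasure (liouville \<sigma> \<tau> lmb) a \<noteq> \<infinity>"
    proof
      fix a assume "a \<in> A"
      then have "emeasure (liouville \<sigma> \<tau> lmb) a \<le> emeasure mu_hat a" "emeasure mu_hat a \<noteq> \<infinity>"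
        using liou_le[OF tau l] A by auto
      then show "emeasure (liouville \<sigma> \<tau> lmb) a \<noteq> \<infinity>" by (auto simp: top_unique)
    qed
  qed (use A in auto)
qed



theorem lemma2p4:
  fixes \<tau> :: complex and \<sigma> lmb :: real
  assumes "Im \<tau> > 0" and "lmb > 0" and "0 < \<sigma>" and "\<sigma> < 2 * sqrt pi"
  shows "sigma_finite_measure (liouville \<sigma> \<tau> lmb)
    \<and> (\<forall>\<epsilon>. 0 < \<epsilon> \<and> \<epsilon> < 1 \<longrightarrow>
         emeasure (liouville \<sigma> \<tau> lmb)
           {\<phi> \<in> space (liouville \<sigma> \<tau> lmb). \<epsilon> < gmc_mass \<sigma> \<tau> \<phi> \<and> gmc_mass \<sigma> \<tau> \<phi> < 1 / \<epsilon>} < \<infinity>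
       \<and> emeasure mu_hat
           {\<phi> \<in> space mu_hat. \<epsilon> < gmc_mass \<sigma> \<tau> \<phi> \<and> gmc_mass \<sigma> \<tau> \<phi> < 1 / \<epsilon>} < \<infinity>)
    \<and> (\<forall>f \<epsilon> a p. in_H \<tau> f \<and> 0 < \<epsilon> \<and> \<epsilon> < 1 \<and> a > 0 \<and> 1 \<le> p \<longrightarrow>
         in_Lp mu_hat p (\<lambda>\<phi>. f_Delta_phi \<sigma> \<tau> f \<phi> * indicator {\<epsilon>..1/\<epsilon>} (gmc_mass \<sigma> \<tau> \<phi>))
       \<and> in_Lp (liouville \<sigma> \<tau> lmb) p
           (\<lambda>\<phi>. f_Delta_phi \<sigma> \<tau> f \<phi> * indicator {\<epsilon>..1/\<epsilon>} (gmc_mass \<sigma> \<tau> \<phi>))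
       \<and> integrable mu_hat
           (\<lambda>\<phi>. exp (a * \<bar>H_pair \<sigma> \<tau> f \<phi>\<bar>) * indicator {\<epsilon>..1/\<epsilon>} (gmc_mass \<sigma> \<tau> \<phi>))
       \<and> integrable (liouville \<sigma> \<tau> lmb)
           (\<lambda>\<phi>. exp (a * \<bar>H_pair \<sigma> \<tau> f \<phi>\<bar>) * indicator {\<epsilon>..1/\<epsilon>} (gmc_mass \<sigma> \<tau> \<phi>)))"
proof (intro conjI allI impI)
  note tau = assms(1)
  have l: "lmb \<ge> 0" using assms(2) by simp
  note gm = gmc_mass_meas[OF tau, measurable]
  show "sigma_finite_measure (liouville \<sigma> \<tau> lmb)" by (rule sf_liou[OF tau l])
  fix \<epsilon> :: real
  {
    assume e: "0 < \<epsilon> \<and> \<epsilon> < 1"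
    let ?A = "{\<phi> \<in> space mu_hat. \<epsilon> < gmc_mass \<sigma> \<tau> \<phi> \<and> gmc_mass \<sigma> \<tau> \<phi> < 1 / \<epsilon>}"
    let ?B = "{\<phi> \<in> space mu_hat. gmc_mass \<sigma> \<tau> \<phi> \<in> {\<epsilon>..1/\<epsilon>}}"
    have Aset: "?A \<in> sets mu_hat" by measurable
    have Bset: "?B \<in> sets mu_hat" by measurable
    have "emeasure mu_hat ?A \<le> emeasure mu_hat ?B"
      by (rule emeasure_mono[OF _ Bset]) auto
    also have "\<dots> = (\<integral>\<^sup>+\<phi>. (\<lambda>_. 1::ennreal) (snd \<phi>) * indicator {\<epsilon>..1/\<epsilon>} (gmc_mass \<sigma> \<tau> \<phi>) \<partial>mu_hat)"
      by (subst nn_integral_indicator[OF Bset, symmetric]) (intro nn_integral_cong, simp add: indicator_def)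
    also have "\<dots> \<le> ennreal (- ln \<epsilon>) * (\<integral>\<^sup>+\<xi>. 1 \<partial>gff_mu)"
      by (rule slice_bound[OF tau]) (use e in auto)
    also have "\<dots> < \<infinity>"
      using prob_space.emeasure_space_1[OF gff_prob] by (simp add: ennreal_mult_less_top)
    finally have fin: "emeasure mu_hat ?A < \<infinity>" .
    then show "emeasure mu_hat ?A < \<infinity>" .
    have "emeasure (liouville \<sigma> \<tau> lmb) ?A \<le> emeasure mu_hat ?A"
      by (rule liou_le[OF tau l Aset])
    with fin show "emeasure (liouville \<sigma> \<tau> lmb)
           {\<phi> \<in> space (liouville \<sigma> \<tau> lmb). \<epsilon> < gmc_mass \<sigma> \<tau> \<phi> \<and> gmc_mass \<sigma> \<tau> \<phi> < 1 / \<epsilon>} < \<infinity>"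
      by simp
  }
  fix f :: "complex \<Rightarrow> real" and a p :: real
  assume h: "in_H \<tau> f \<and> 0 < \<epsilon> \<and> \<epsilon> < 1 \<and> a > 0 \<and> 1 \<le> p"
  then have f: "in_H \<tau> f" and e: "0 < \<epsilon>" "\<epsilon> < 1" and a: "a > 0" and p: "1 \<le> p" by auto
  show ex1: "integrable mu_hat (\<lambda>\<phi>. exp (a * \<bar>H_pair \<sigma> \<tau> f \<phi>\<bar>) * indicator {\<epsilon>..1/\<epsilon>} (gmc_mass \<sigma> \<tau> \<phi>))"
    using exp_int_mu_hat[OF tau f _ e] a by simp
  show "integrable (liouville \<sigma> \<tau> lmb) (\<lambda>\<phi>. exp (a * \<bar>H_pair \<sigma> \<tau> f \<phi>\<bar>) * indicator {\<epsilon>..1/\<epsilon>} (gmc_mass \<sigma> \<tau> \<phi>))"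
    by (rule liou_integrable[OF tau l ex1])
  let ?F = "\<lambda>\<phi>. f_Delta_phi \<sigma> \<tau> f \<phi> * indicator {\<epsilon>..1/\<epsilon>} (gmc_mass \<sigma> \<tau> \<phi>)"
  have Fm[measurable]: "?F \<in> borel_measurable mu_hat"
    unfolding f_Delta_phi_def by measurable
  have ex2: "integrable mu_hat (\<lambda>\<phi>. p powr p * (exp (1 * \<bar>H_pair \<sigma> \<tau> f \<phi>\<bar>) * indicator {\<epsilon>..1/\<epsilon>} (gmc_mass \<sigma> \<tau> \<phi>)))"
    using exp_int_mu_hat[OF tau f _ e, of 1 \<sigma>] by simp
  have intF: "integrable mu_hat (\<lambda>\<phi>. \<bar>?F \<phi>\<bar> powr p)"
  proof (rule Bochner_Integration.integrable_bound[OF ex2])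
    show "(\<lambda>\<phi>. \<bar>?F \<phi>\<bar> powr p) \<in> borel_measurable mu_hat" by measurable
    show "AE \<phi> in mu_hat. norm (\<bar>?F \<phi>\<bar> powr p) \<le> norm (p powr p * (exp (1 * \<bar>H_pair \<sigma> \<tau> f \<phi>\<bar>) * indicator {\<epsilon>..1/\<epsilon>} (gmc_mass \<sigma> \<tau> \<phi>)))"
    proof (intro AE_I2)
      fix \<phi>
      show "norm (\<bar>?F \<phi>\<bar> powr p) \<le> norm (p powr p * (exp (1 * \<bar>H_pair \<sigma> \<tau> f \<phi>\<bar>) * indicator {\<epsilon>..1/\<epsilon>} (gmc_mass \<sigma> \<tau> \<phi>)))"
      proof (cases "gmc_mass \<sigma> \<tau> \<phi> \<in> {\<epsilon>..1/\<epsilon>}")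
        case True
        have "\<bar>H_pair \<sigma> \<tau> f \<phi>\<bar> powr p \<le> p powr p * exp \<bar>H_pair \<sigma> \<tau> f \<phi>\<bar>"
          by (rule powr_le_exp) (use p in auto)
        with True show ?thesis by (simp add: f_Delta_phi_def)
      next
        case False
        then show ?thesis using p by simp
      qed
    qed
  qed
  show "in_Lp mu_hat p ?F" unfolding in_Lp_def using Fm intF by simp
  show "in_Lp (liouville \<sigma> \<tau> lmb) p ?F"
    unfolding in_Lp_def
  proof
    show "?F \<in> borel_measurable (liouville \<sigma> \<tau> lmb)"
      using Fm by (simp add: measurable_cong_sets[OF sets_liou refl])
    show "integrable (liouville \<sigma> \<tau> lmb) (\<lambda>\<phi>. \<bar>?F \<phi>\<bar> powr p)"
      by (rule liou_integrable[OF tau l intF])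
  qed
qed


end
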